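(* Let $(w,F)\in X\times\mathbb R$ be a solution of the height equation. (i) If $w>0$ on $T$, and if $F$ is such that $\Phi_p(p;1/F^2)\ge0$ for $p\in[-1,0]$, then $A(1/F^2)<0$. (ii) If $F=F_{\mathrm{cr}}$, then $w\equiv0$.
   Context: Fix $\alpha\in(0,1)$, $\rho\in C^{2+\alpha}([-1,0])$ with $\rho>0$, $\rho_p\le0$, and $H\in C^{3+\alpha}([-1,0])$ with $H(-1)=0$, $H(0)=1$, $H_p>0$. Let $R=\mathbb R\times(-1,0)$ (coordinates $(q,p)$), $T=\mathbb R\times\{0\}$, $B=\mathbb R\times\{-1\}$. For $F>0$, $(w,F)$ solves the height equation if $h=H+w$ satisfies $\big(-\frac{1+h_q^2}{2h_p^2}+\frac1{2H_p^2}\big)_p+\big(\frac{h_q}{h_p}\big)_q-\frac1{F^2}\rho_p(h-H)=0$ in $R$, $\frac{1+h_q^2}{2h_p^2}-\frac1{2H_p^2}+\frac1{F^2}\rho(h-1)=0$ on $T$, $h=0$ on $B$, and $0<\inf_R(H_p+w_p)<\infty$. $X$ consists of $w\in C^{3+\alpha}(\overline R)$ with finite $C^{3+\alpha}$ norm, even in $q$, with $w$ and its derivatives of order $\le2$ tending to $0$ uniformly as $|q|\to\infty$, and $w=0$ on $B$. For $\mu\ge0$, $\Phi(\cdot;\mu)$ is the solution of $(\Phi_p/H_p^3)_p-\mu\rho_p\Phi=0$ on $(-1,0)$, $\Phi(-1)=0$, $\Phi_p(-1)=1$, and $A(\mu):=-\Phi_p(0;\mu)/H_p(0)^3+\mu\rho(0)\Phi(0;\mu)$.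 $\mu_{\mathrm{cr}}$ is the smallest positive $\mu$ with $A(\mu)=0$ (equivalently, for which $(\phi_p/H_p^3)_p-\mu\rho_p\phi=0$, $\phi(-1)=0$, $-\phi_p(0)/H_p(0)^3+\mu\rho(0)\phi(0)=0$ has a nontrivial solution), and $F_{\mathrm{cr}}=\mu_{\mathrm{cr}}^{-1/2}$. *)

theory Defs
  imports "HOL-Analysis.Analysis"
begin

definition Rbar :: "(real \<times> real) set" where
  "Rbar = UNIV \<times> {-1..0}"

definition Ropen :: "(real \<times> real) set" where
  "Ropen = UNIV \<times> {-1<..<0}"

definition dI :: "(real \<Rightarrow> real) \<Rightarrow> real \<Rightarrow> real" where
  "dI f = (\<lambda>x. vector_derivative f (at x within {-1..0}))"

definition pdq :: "(real \<times> real \<Rightarrow> real) \<Rightarrow> real \<times> real \<Rightarrow> real" where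
  "pdq f = (\<lambda>x. vector_derivative (\<lambda>s. f (s, snd x)) (at (fst x)))"

definition pdp :: "(real \<times> real \<Rightarrow> real) \<Rightarrow> real \<times> real \<Rightarrow> real" where
  "pdp f = (\<lambda>x. vector_derivative (\<lambda>t. f (fst x, t)) (at (snd x) within {-1..0}))"

datatype dir = Dq | Dp

definition pdir :: "dir \<Rightarrow> (real \<times> real \<Rightarrow> real) \<Rightarrow> real \<times> real \<Rightarrow> real" where
  "pdir d = (case d of Dq \<Rightarrow> pdq | Dp \<Rightarrow> pdp)"

text \<open>Iterated partial derivative along a word of directions (the last
  element of the list is applied first).\<close>

fun pd :: "dir list \<Rightarrow> (real \<times> real \<Rightarrow> real) \<Rightarrow> real \<times> real \<Rightarrow> real" where
  "pd [] f = f"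
| "pd (d # ds) f = pdir d (pd ds f)"

definition holder_cont :: "real \<Rightarrow> ('a::metric_space) set \<Rightarrow> ('a \<Rightarrow> real) \<Rightarrow> bool" where
  "holder_cont \<alpha> S g \<longleftrightarrow> (\<exists>C. \<forall>x\<in>S. \<forall>y\<in>S. \<bar>g x - g y\<bar> \<le> C * dist x y powr \<alpha>)"

definition C_ka_I :: "nat \<Rightarrow> real \<Rightarrow> (real \<Rightarrow> real) \<Rightarrow> bool" where
  "C_ka_I k \<alpha> f \<longleftrightarrow>
     (\<forall>j<k. \<forall>x\<in>{-1..0}. ((dI ^^ j) f) differentiable (at x within {-1..0}))
   \<and> continuous_on {-1..0} ((dI ^^ k) f)
   \<and> holder_cont \<alpha> {-1..0} ((dI ^^ k) f)"

definition C_ka_strip :: "nat \<Rightarrow> real \<Rightarrow> (real \<times> real \<Rightarrow> real) \<Rightarrow> bool" where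
  "C_ka_strip k \<alpha> f \<longleftrightarrow>
     (\<forall>ds. length ds < k \<longrightarrow> (\<forall>x\<in>Rbar.
          (\<lambda>s. pd ds f (s, snd x)) differentiable (at (fst x))
        \<and> (\<lambda>t. pd ds f (fst x, t)) differentiable (at (snd x) within {-1..0})))
   \<and> (\<forall>ds. length ds \<le> k \<longrightarrow> continuous_on Rbar (pd ds f) \<and> bounded (pd ds f ` Rbar))
   \<and> (\<forall>ds. length ds = k \<longrightarrow> holder_cont \<alpha> Rbar (pd ds f))"

definition in_X :: "real \<Rightarrow> (real \<times> real \<Rightarrow> real) \<Rightarrow> bool" where
  "in_X \<alpha> w \<longleftrightarrow>
     C_ka_strip 3 \<alpha> w
   \<and> (\<forall>q p. w (-q, p) = w (q, p))
   \<and> (\<forall>ds. length ds \<le> 2 \<longrightarrow>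
        (\<forall>\<epsilon>>0. \<exists>M. \<forall>q p. M \<le> \<bar>q\<bar> \<and> -1 \<le> p \<and> p \<le> 0 \<longrightarrow> \<bar>pd ds w (q, p)\<bar> < \<epsilon>))
   \<and> (\<forall>q. w (q, -1) = 0)"

definition height_eq ::
  "(real \<Rightarrow> real) \<Rightarrow> (real \<Rightarrow> real) \<Rightarrow> (real \<times> real \<Rightarrow> real) \<Rightarrow> real \<Rightarrow> bool" where
  "height_eq H \<rho> w F \<longleftrightarrow>
     (let h = (\<lambda>x. H (snd x) + w x) in
        F > 0
      \<and> (\<forall>x\<in>Ropen.
            pdp (\<lambda>y. - (1 + (pdq h y)\<^sup>2) / (2 * (pdp h y)\<^sup>2) + 1 / (2 * (dI H (snd y))\<^sup>2)) x
          + pdq (\<lambda>y. pdq h y / pdp h y) x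
          - (1 / F\<^sup>2) * dI \<rho> (snd x) * (h x - H (snd x)) = 0)
      \<and> (\<forall>q. (1 + (pdq h (q, 0))\<^sup>2) / (2 * (pdp h (q, 0))\<^sup>2) - 1 / (2 * (dI H 0)\<^sup>2)
              + (1 / F\<^sup>2) * \<rho> 0 * (h (q, 0) - 1) = 0)
      \<and> (\<forall>q. h (q, -1) = 0)
      \<and> (\<exists>\<delta>>0. \<forall>x\<in>Ropen. \<delta> \<le> pdp h x))"

definition Phi_sol :: "(real \<Rightarrow> real) \<Rightarrow> (real \<Rightarrow> real) \<Rightarrow> real \<Rightarrow> (real \<Rightarrow> real) \<Rightarrow> bool" where
  "Phi_sol H \<rho> \<mu> \<phi> \<longleftrightarrow>
     (\<forall>p\<in>{-1..0}. (\<phi> has_real_derivative dI \<phi> p) (at p within {-1..0})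
        \<and> ((\<lambda>s. dI \<phi> s / (dI H s) ^ 3) has_real_derivative \<mu> * dI \<rho> p * \<phi> p)
             (at p within {-1..0}))
   \<and> \<phi> (-1) = 0 \<and> dI \<phi> (-1) = 1"

definition A_fun :: "(real \<Rightarrow> real) \<Rightarrow> (real \<Rightarrow> real) \<Rightarrow> (real \<Rightarrow> real \<Rightarrow> real) \<Rightarrow> real \<Rightarrow> real" where
  "A_fun H \<rho> Phi \<mu> = - dI (Phi \<mu>) 0 / (dI H 0) ^ 3 + \<mu> * \<rho> 0 * Phi \<mu> 0"

definition is_mu_cr :: "(real \<Rightarrow> real) \<Rightarrow> (real \<Rightarrow> real) \<Rightarrow> (real \<Rightarrow> real \<Rightarrow> real) \<Rightarrow> real \<Rightarrow> bool" where
  "is_mu_cr H \<rho> Phi \<mu> \<longleftrightarrow>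
     \<mu> > 0 \<and> A_fun H \<rho> Phi \<mu> = 0 \<and> (\<forall>\<nu>. 0 < \<nu> \<and> \<nu> < \<mu> \<longrightarrow> A_fun H \<rho> Phi \<nu> \<noteq> 0)"

end

theory Submission
  imports Defs
begin

lemma interior_Icc_m10: "interior {-1..0::real} = {-1<..<0}" by simp

lemma deriv_within_to_at:
  assumes "(f has_real_derivative D) (at t within {a..b})" "a < t" "t < b"
  shows "(f has_real_derivative D) (at t)"
proof -
  have "t \<in> interior {a..b}" using assms by simp
  then have "at t within {a..b} = at t" by (rule at_within_interior)
  then show ?thesis using assms(1) by simp
qed

lemma deriv_within_cont:
  assumes "\<And>t. t\<in>{a..b} \<Longrightarrow> (f has_real_derivative f' t) (at t within {a..b})"
  shows "continuous_on {a..b} f"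
  using assms
  by (meson DERIV_continuous continuous_on_eq_continuous_within)

lemma deriv_within_nonpos_dec:
  fixes f :: "real \<Rightarrow> real"
  assumes d: "\<And>t. t\<in>{a..b} \<Longrightarrow> (f has_real_derivative f' t) (at t within {a..b})"
    and n: "\<And>t. t\<in>{a..b} \<Longrightarrow> f' t \<le> 0"
    and xy: "a \<le> x" "x \<le> y" "y \<le> b"
  shows "f y \<le> f x"
proof -
  have c: "continuous_on {a..b} f" by (rule deriv_within_cont[OF d])
  have "(-f) x \<le> (-f) y"
  proof (rule DERIV_nonneg_imp_increasing_open[OF xy(2)])
    fix t assume t: "x < t" "t < y"
    have "(f has_real_derivative f' t) (at t)"
      using d[of t] t xy by (intro deriv_within_to_at[of f _ t a b]) auto
    then have "((-f) has_real_derivative -f' t) (at t)"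
      using DERIV_minus by (simp add: fun_Compl_def)
    then show "\<exists>y. ((-f) has_real_derivative y) (at t) \<and> 0 \<le> y"
      using n[of t] t xy by (intro exI[of _ "-f' t"]) auto
  next
    show "continuous_on {x..y} (-f)"
      using c xy by (auto intro!: continuous_on_minus continuous_on_subset[OF c] simp: fun_Compl_def)
  qed
  then show ?thesis by simp
qed

lemma deriv_within_nonneg_inc:
  fixes f :: "real \<Rightarrow> real"
  assumes d: "\<And>t. t\<in>{a..b} \<Longrightarrow> (f has_real_derivative f' t) (at t within {a..b})"
    and n: "\<And>t. t\<in>{a..b} \<Longrightarrow> f' t \<ge> 0"
    and xy: "a \<le> x" "x \<le> y" "y \<le> b"
  shows "f x \<le> f y"
proof -
  have "(\<lambda>t. - f t) y \<le> (\<lambda>t. - f t) x"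
    by (rule deriv_within_nonpos_dec[where f'="\<lambda>t. - f' t", OF _ _ xy])
       (use d n in \<open>auto intro: DERIV_minus\<close>)
  then show ?thesis by simp
qed

lemma gronwall_Icc:
  fixes f :: "real \<Rightarrow> real"
  assumes d: "\<And>t. t\<in>{a..b} \<Longrightarrow> (f has_real_derivative f' t) (at t within {a..b})"
    and n: "\<And>t. t\<in>{a..b} \<Longrightarrow> f' t \<le> c * f t + k"
    and c: "c > 0" and k: "k \<ge> 0" and x: "a \<le> x" "x \<le> b"
  shows "f x \<le> (f a + k / c) * exp (c * (x - a))"
proof -
  define g where "g t = (f t + k / c) * exp (- c * (t - a))" for t
  have dg: "(g has_real_derivative (f' t - c * f t - k) * exp (- c * (t - a))) (at t within {a..b})"
    if "t \<in> {a..b}" for t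
  proof -
    have 1: "((\<lambda>t. f t + k / c) has_real_derivative f' t + 0) (at t within {a..b})"
      by (intro DERIV_add d[OF that] DERIV_const)
    have 2: "((\<lambda>t. exp (- c * (t - a))) has_real_derivative exp (- c * (t - a)) * (- c * (1 - 0))) (at t within {a..b})"
      by (intro DERIV_chain2[OF DERIV_exp] DERIV_cmult DERIV_diff DERIV_ident DERIV_const)
    show ?thesis unfolding g_def
      by (rule DERIV_cong[OF DERIV_mult[OF 1 2]]) (use c in \<open>simp add: field_simps\<close>)
  qed
  have "g x \<le> g a"
    by (rule deriv_within_nonpos_dec[OF dg])
       (use n x in \<open>auto intro!: mult_nonpos_nonneg simp: add.commute diff_le_eq\<close>)
  then have "(f x + k / c) * exp (- c * (x - a)) \<le> f a + k / c" by (simp add: g_def)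
  then have "(f x + k / c) * exp (- c * (x - a)) * exp (c * (x - a)) \<le> (f a + k / c) * exp (c * (x - a))"
    by (intro mult_right_mono) auto
  moreover have "exp (- c * (x - a)) * exp (c * (x - a)) = 1" by (simp add: exp_add[symmetric])
  ultimately have "(f x + k / c) \<le> (f a + k / c) * exp (c * (x - a))"
    by (metis mult.assoc mult_1_right)
  moreover have "k / c \<ge> 0" using c k by simp
  ultimately show ?thesis by linarith
qed


lemma cont_bound:
  fixes f :: "real \<Rightarrow> real"
  assumes "continuous_on {a..b} f"
  shows "\<exists>B\<ge>0. \<forall>x\<in>{a..b}. \<bar>f x\<bar> \<le> B"
proof -
  have "compact (f ` {a..b})" by (rule compact_continuous_image[OF assms compact_Icc])
  then obtain B where "B > 0" "\<forall>y\<in>f ` {a..b}. norm y \<le> B"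
    using compact_imp_bounded bounded_pos by metis
  then show ?thesis by (intro exI[of _ B]) auto
qed

lemma ineq_2uvX:
  fixes u v X M :: real
  assumes "\<bar>X\<bar> \<le> M"
  shows "2 * u * v * X \<le> M * (u\<^sup>2 + v\<^sup>2)"
proof -
  have a: "\<bar>2 * u * v\<bar> \<le> u\<^sup>2 + v\<^sup>2"
  proof -
    have "0 \<le> (\<bar>u\<bar> - \<bar>v\<bar>)\<^sup>2" by simp
    then show ?thesis by (simp add: power2_eq_square abs_mult algebra_simps)
  qed
  have "2 * u * v * X \<le> \<bar>2 * u * v\<bar> * \<bar>X\<bar>" by (metis abs_ge_self abs_mult)
  also have "\<dots> \<le> (u\<^sup>2 + v\<^sup>2) * M" by (intro mult_mono a assms) auto
  finally show ?thesis by (simp add: mult.commute)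
qed

lemma ineq_2vY:
  fixes v Y :: real
  shows "2 * v * Y \<le> v\<^sup>2 + Y\<^sup>2"
proof -
  have "0 \<le> (v - Y)\<^sup>2" by simp
  then show ?thesis by (simp add: power2_eq_square algebra_simps)
qed

locale ode_setup =
  fixes H \<rho> :: "real \<Rightarrow> real" and Phi :: "real \<Rightarrow> real \<Rightarrow> real" and \<alpha> :: real
  assumes rho_reg: "C_ka_I 2 \<alpha> \<rho>" and H_reg: "C_ka_I 3 \<alpha> H"
    and H_p: "\<forall>p\<in>{-1..0}. dI H p > 0"
    and Phi: "\<forall>\<mu>\<ge>0. Phi_sol H \<rho> \<mu> (Phi \<mu>)"
begin

definition psi :: "real \<Rightarrow> real \<Rightarrow> real" where
  "psi \<mu> s = dI (Phi \<mu>) s / (dI H s) ^ 3"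

lemma Hp_cont: "continuous_on {-1..0} (dI H)"
proof -
  have "\<forall>x\<in>{-1..0::real}. ((dI ^^ 1) H) differentiable (at x within {-1..0})"
    using H_reg unfolding C_ka_I_def by (metis One_nat_def Suc_less_eq numeral_3_eq_3 zero_less_Suc)
  then show ?thesis
    by (auto simp: continuous_on_eq_continuous_within intro: differentiable_imp_continuous_within)
qed

lemma rp_cont: "continuous_on {-1..0} (dI \<rho>)"
proof -
  have "\<forall>x\<in>{-1..0::real}. ((dI ^^ 1) \<rho>) differentiable (at x within {-1..0})"
    using rho_reg unfolding C_ka_I_def by (metis less_numeral_extra(4) not_less_iff_gr_or_eq one_less_numeral_iff semiring_norm(76))
  then show ?thesis
    by (auto simp: continuous_on_eq_continuous_within intro: differentiable_imp_continuous_within)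
qed

lemma psi_d:
  assumes "\<mu> \<ge> 0" "p \<in> {-1..0}"
  shows "(psi \<mu> has_real_derivative \<mu> * dI \<rho> p * Phi \<mu> p) (at p within {-1..0})"
  using Phi assms unfolding Phi_sol_def psi_def[abs_def] by blast

lemma phi_d:
  assumes "\<mu> \<ge> 0" "p \<in> {-1..0}"
  shows "(Phi \<mu> has_real_derivative (dI H p)^3 * psi \<mu> p) (at p within {-1..0})"
proof -
  have "dI H p \<noteq> 0" using H_p assms by force
  then have "(dI H p)^3 * psi \<mu> p = dI (Phi \<mu>) p" by (simp add: psi_def)
  then show ?thesis using Phi assms unfolding Phi_sol_def by auto
qed

lemma phi_m1: "\<mu> \<ge> 0 \<Longrightarrow> Phi \<mu> (-1) = 0"
  using Phi unfolding Phi_sol_def by auto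

lemma psi_m1: "\<mu> \<ge> 0 \<Longrightarrow> psi \<mu> (-1) = 1 / (dI H (-1))^3"
  using Phi unfolding Phi_sol_def psi_def by auto

lemma A_eq: "A_fun H \<rho> Phi \<mu> = - psi \<mu> 0 + \<mu> * \<rho> 0 * Phi \<mu> 0"
  unfolding A_fun_def psi_def by simp

lemma KR: "\<exists>K R. K \<ge> 0 \<and> R \<ge> 0 \<and> (\<forall>p\<in>{-1..0}. \<bar>(dI H p)^3\<bar> \<le> K \<and> \<bar>dI \<rho> p\<bar> \<le> R)"
proof -
  obtain K where K: "K \<ge> 0" "\<forall>x\<in>{-1..0}. \<bar>(dI H x)^3\<bar> \<le> K"
    using cont_bound[of "-1" 0 "\<lambda>x. (dI H x)^3"] Hp_cont by (auto intro: continuous_intros)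
  obtain R where R: "R \<ge> 0" "\<forall>x\<in>{-1..0}. \<bar>dI \<rho> x\<bar> \<le> R"
    using cont_bound[OF rp_cont] by auto
  show ?thesis using K R by blast
qed

lemma energy_bound:
  assumes "\<Lambda> \<ge> 0"
  shows "\<exists>B. \<forall>\<mu>\<in>{0..\<Lambda>}. \<forall>p\<in>{-1..0}. (Phi \<mu> p)\<^sup>2 + (psi \<mu> p)\<^sup>2 \<le> B"
proof -
  obtain K R where KR: "K \<ge> 0" "R \<ge> 0" "\<And>p. p\<in>{-1..0} \<Longrightarrow> \<bar>(dI H p)^3\<bar> \<le> K \<and> \<bar>dI \<rho> p\<bar> \<le> R"
    using KR by blast
  define c where "c = K + \<Lambda> * R + 1"
  have c: "c > 0" using KR assms by (simp add: c_def add_nonneg_pos)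
  define e0 where "e0 = (1 / (dI H (-1))^3)\<^sup>2"
  show ?thesis
  proof (intro exI[of _ "e0 * exp c"] ballI)
    fix \<mu> p assume \<mu>: "\<mu> \<in> {0..\<Lambda>}" and p: "p \<in> {-1..(0::real)}"
    let ?e = "\<lambda>t. (Phi \<mu> t)\<^sup>2 + (psi \<mu> t)\<^sup>2"
    let ?e' = "\<lambda>t. 2 * Phi \<mu> t * ((dI H t)^3 * psi \<mu> t) + 2 * psi \<mu> t * (\<mu> * dI \<rho> t * Phi \<mu> t)"
    have d: "(?e has_real_derivative ?e' t) (at t within {-1..0})" if "t \<in> {-1..0}" for t
      using phi_d[of \<mu> t] psi_d[of \<mu> t] \<mu> that
      by (auto intro!: derivative_eq_intros simp: algebra_simps)
    have b: "?e' t \<le> c * ?e t + 0" if t: "t \<in> {-1..0}" for t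
    proof -
      have "?e' t = 2 * Phi \<mu> t * psi \<mu> t * ((dI H t)^3 + \<mu> * dI \<rho> t)" by (simp add: algebra_simps)
      also have "\<dots> \<le> (K + \<Lambda> * R) * ?e t"
      proof (rule ineq_2uvX)
        have "\<bar>\<mu> * dI \<rho> t\<bar> \<le> \<Lambda> * R"
          using KR(3)[OF t] \<mu> by (auto simp: abs_mult intro!: mult_mono)
        then show "\<bar>(dI H t)^3 + \<mu> * dI \<rho> t\<bar> \<le> K + \<Lambda> * R"
          using KR(3)[OF t] by (meson abs_triangle_ineq add_mono order_trans)
      qed
      also have "\<dots> \<le> c * ?e t" unfolding c_def by (intro mult_right_mono) auto
      finally show ?thesis by simp
    qed
    have "?e p \<le> (?e (-1) + 0 / c) * exp (c * (p - (-1)))"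
      by (rule gronwall_Icc[OF d b c]) (use p in auto)
    also have "?e (-1) = e0" using \<mu> by (simp add: phi_m1 psi_m1 e0_def)
    also have "(e0 + 0 / c) * exp (c * (p - (-1))) \<le> e0 * exp c"
      using p c by (auto simp: e0_def intro!: mult_left_mono)
    finally show "?e p \<le> e0 * exp c" .
  qed
qed

lemma lip_bound:
  assumes "\<Lambda> \<ge> 0"
  shows "\<exists>L. \<forall>\<mu>\<in>{0..\<Lambda>}. \<forall>\<nu>\<in>{0..\<Lambda>}. \<forall>p\<in>{-1..0}.
           \<bar>Phi \<mu> p - Phi \<nu> p\<bar> \<le> L * \<bar>\<mu> - \<nu>\<bar> \<and> \<bar>psi \<mu> p - psi \<nu> p\<bar> \<le> L * \<bar>\<mu> - \<nu>\<bar>"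
proof -
  obtain K R where KR: "K \<ge> 0" "R \<ge> 0" "\<And>p. p\<in>{-1..0} \<Longrightarrow> \<bar>(dI H p)^3\<bar> \<le> K \<and> \<bar>dI \<rho> p\<bar> \<le> R"
    using KR by blast
  obtain B where B: "\<And>\<mu> p. \<mu>\<in>{0..\<Lambda>} \<Longrightarrow> p\<in>{-1..0} \<Longrightarrow> (Phi \<mu> p)\<^sup>2 + (psi \<mu> p)\<^sup>2 \<le> B"
    using energy_bound[OF assms] by blast
  define c where "c = K + \<Lambda> * R + 1"
  have c: "c > 0" using KR assms by (simp add: c_def add_nonneg_pos)
  define L where "L = sqrt (R\<^sup>2 * \<bar>B\<bar> / c * exp c)"
  show ?thesis
  proof (intro exI[of _ L] ballI)
    fix \<mu> \<nu> p assume \<mu>: "\<mu> \<in> {0..\<Lambda>}" and \<nu>: "\<nu> \<in> {0..\<Lambda>}" and p: "p \<in> {-1..(0::real)}"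
    let ?u = "\<lambda>t. Phi \<mu> t - Phi \<nu> t"
    let ?v = "\<lambda>t. psi \<mu> t - psi \<nu> t"
    let ?D = "\<lambda>t. (?u t)\<^sup>2 + (?v t)\<^sup>2"
    let ?D' = "\<lambda>t. 2 * (((dI H t)^3 * psi \<mu> t - (dI H t)^3 * psi \<nu> t) * ?u t)
          + 2 * ((\<mu> * dI \<rho> t * Phi \<mu> t - \<nu> * dI \<rho> t * Phi \<nu> t) * ?v t)"
    define k where "k = (\<mu> - \<nu>)\<^sup>2 * (R\<^sup>2 * \<bar>B\<bar>)"
    have k: "k \<ge> 0" by (simp add: k_def)
    have d: "(?D has_real_derivative ?D' t) (at t within {-1..0})" if "t \<in> {-1..0}" for t
    proof -
      have du: "(?u has_real_derivative (dI H t)^3 * psi \<mu> t - (dI H t)^3 * psi \<nu> t) (at t within {-1..0})"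
        using DERIV_diff[OF phi_d[OF _ that] phi_d[OF _ that], of \<mu> \<nu>] \<mu> \<nu> by simp
      have dv: "(?v has_real_derivative \<mu> * dI \<rho> t * Phi \<mu> t - \<nu> * dI \<rho> t * Phi \<nu> t) (at t within {-1..0})"
        using DERIV_diff[OF psi_d[OF _ that] psi_d[OF _ that], of \<mu> \<nu>] \<mu> \<nu> by simp
      show ?thesis
        by (intro DERIV_cong[OF DERIV_add[OF DERIV_power[OF du, of 2] DERIV_power[OF dv, of 2]]]) auto
    qed
    have b: "?D' t \<le> c * ?D t + k" if t: "t \<in> {-1..0}" for t
    proof -
      have "?D' t = 2 * ?u t * ?v t * ((dI H t)^3 + \<mu> * dI \<rho> t) + 2 * ?v t * ((\<mu> - \<nu>) * dI \<rho> t * Phi \<nu> t)"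
        by (simp add: algebra_simps)
      also have "\<dots> \<le> (K + \<Lambda> * R) * ?D t + ((?v t)\<^sup>2 + ((\<mu> - \<nu>) * dI \<rho> t * Phi \<nu> t)\<^sup>2)"
      proof (rule add_mono)
        show "2 * ?u t * ?v t * ((dI H t)^3 + \<mu> * dI \<rho> t) \<le> (K + \<Lambda> * R) * ?D t"
        proof (rule ineq_2uvX)
          have "\<bar>\<mu> * dI \<rho> t\<bar> \<le> \<Lambda> * R"
            using KR(3)[OF t] \<mu> by (auto simp: abs_mult intro!: mult_mono)
          then show "\<bar>(dI H t)^3 + \<mu> * dI \<rho> t\<bar> \<le> K + \<Lambda> * R"
            using KR(3)[OF t] by (meson abs_triangle_ineq add_mono order_trans)
        qed
      qed (rule ineq_2vY)
      also have "((\<mu> - \<nu>) * dI \<rho> t * Phi \<nu> t)\<^sup>2 \<le> k"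
      proof -
        have "((\<mu> - \<nu>) * dI \<rho> t * Phi \<nu> t)\<^sup>2 = (\<mu> - \<nu>)\<^sup>2 * ((dI \<rho> t)\<^sup>2 * (Phi \<nu> t)\<^sup>2)"
          by (simp add: power_mult_distrib)
        also have "\<dots> \<le> (\<mu> - \<nu>)\<^sup>2 * (R\<^sup>2 * \<bar>B\<bar>)"
        proof (intro mult_left_mono mult_mono)
          have "\<bar>dI \<rho> t\<bar>\<^sup>2 \<le> R\<^sup>2" using KR(3)[OF t] by (intro power_mono) auto
          then show "(dI \<rho> t)\<^sup>2 \<le> R\<^sup>2" by simp
          show "(Phi \<nu> t)\<^sup>2 \<le> \<bar>B\<bar>" using B[OF \<nu> t]
            by (smt (verit) zero_le_power2)
        qed auto
        finally show ?thesis by (simp add: k_def)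
      qed
      finally have X: "?D' t \<le> (K + \<Lambda> * R) * ?D t + ((?v t)\<^sup>2 + k)" by simp
      have "c * ?D t = (K + \<Lambda> * R) * ?D t + ?D t" unfolding c_def by (simp add: distrib_right)
      moreover have "?D t \<ge> (?v t)\<^sup>2" by simp
      ultimately show ?thesis using X by linarith
    qed
    have "?D p \<le> (?D (-1) + k / c) * exp (c * (p - (-1)))"
      by (rule gronwall_Icc[OF d b c k]) (use p in auto)
    also have "?D (-1) = 0" using \<mu> \<nu> by (simp add: phi_m1 psi_m1)
    also have "(0 + k / c) * exp (c * (p - (-1))) \<le> k / c * exp c"
    proof -
      have "exp (c * (p - (-1))) \<le> exp c" using p c by (simp add: mult_le_cancel_left1)
      moreover have "k / c \<ge> 0" using c k by simp
      ultimately have "k / c * exp (c * (p - (-1))) \<le> k / c * exp c" by (rule mult_left_mono)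
      then show ?thesis by simp
    qed
    also have "\<dots> = (L * \<bar>\<mu> - \<nu>\<bar>)\<^sup>2"
      using c by (simp add: L_def k_def power_mult_distrib)
    finally have D: "?D p \<le> (L * \<bar>\<mu> - \<nu>\<bar>)\<^sup>2" .
    have L0: "L * \<bar>\<mu> - \<nu>\<bar> \<ge> 0" using c by (simp add: L_def)
    have "(?u p)\<^sup>2 \<le> (L * \<bar>\<mu> - \<nu>\<bar>)\<^sup>2" "(?v p)\<^sup>2 \<le> (L * \<bar>\<mu> - \<nu>\<bar>)\<^sup>2"
      using D by (smt (verit) zero_le_power2)+
    then show "\<bar>?u p\<bar> \<le> L * \<bar>\<mu> - \<nu>\<bar> \<and> \<bar>?v p\<bar> \<le> L * \<bar>\<mu> - \<nu>\<bar>"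
      using L0 by (metis abs_le_square_iff abs_of_nonneg)
  qed
qed


lemma lip_cont:
  assumes "\<Lambda> \<ge> 0" "p \<in> {-1..0}"
  shows "continuous_on {0..\<Lambda>} (\<lambda>\<mu>. Phi \<mu> p)" "continuous_on {0..\<Lambda>} (\<lambda>\<mu>. psi \<mu> p)"
proof -
  obtain L where L: "\<And>\<mu> \<nu>. \<mu>\<in>{0..\<Lambda>} \<Longrightarrow> \<nu>\<in>{0..\<Lambda>} \<Longrightarrow>
     \<bar>Phi \<mu> p - Phi \<nu> p\<bar> \<le> L * \<bar>\<mu> - \<nu>\<bar> \<and> \<bar>psi \<mu> p - psi \<nu> p\<bar> \<le> L * \<bar>\<mu> - \<nu>\<bar>"
    using lip_bound[OF assms(1)] assms(2) by blast
  have "(max L 0)-lipschitz_on {0..\<Lambda>} (\<lambda>\<mu>. Phi \<mu> p)"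
  proof (rule lipschitz_onI)
    fix x y assume "x \<in> {0..\<Lambda>}" "y \<in> {0..\<Lambda>}"
    then have "\<bar>Phi x p - Phi y p\<bar> \<le> L * \<bar>x - y\<bar>" using L by blast
    also have "\<dots> \<le> max L 0 * \<bar>x - y\<bar>" by (intro mult_right_mono) auto
    finally show "dist (Phi x p) (Phi y p) \<le> max L 0 * dist x y" by (simp add: dist_real_def)
  qed auto
  then show "continuous_on {0..\<Lambda>} (\<lambda>\<mu>. Phi \<mu> p)" by (rule lipschitz_on_continuous_on)
  have "(max L 0)-lipschitz_on {0..\<Lambda>} (\<lambda>\<mu>. psi \<mu> p)"
  proof (rule lipschitz_onI)
    fix x y assume "x \<in> {0..\<Lambda>}" "y \<in> {0..\<Lambda>}"
    then have "\<bar>psi x p - psi y p\<bar> \<le> L * \<bar>x - y\<bar>" using L by blast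
    also have "\<dots> \<le> max L 0 * \<bar>x - y\<bar>" by (intro mult_right_mono) auto
    finally show "dist (psi x p) (psi y p) \<le> max L 0 * dist x y" by (simp add: dist_real_def)
  qed auto
  then show "continuous_on {0..\<Lambda>} (\<lambda>\<mu>. psi \<mu> p)" by (rule lipschitz_on_continuous_on)
qed

lemma psi_cont: "\<mu> \<ge> 0 \<Longrightarrow> continuous_on {-1..0} (psi \<mu>)"
  by (rule deriv_within_cont[OF psi_d])

lemma Hp3_nn: "t \<in> {-1..0} \<Longrightarrow> (dI H t)^3 \<ge> 0"
  using H_p by (simp add: less_imp_le)

lemma Hp_m1: "dI H (-1) > 0" using H_p by auto

lemma psi0_pos: "p \<in> {-1..0} \<Longrightarrow> psi 0 p > 0"
proof -
  assume p: "p \<in> {-1..0}"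
  have "psi 0 p \<le> psi 0 (-1)"
    by (rule deriv_within_nonpos_dec[OF psi_d[of 0]]) (use p in auto)
  moreover have "psi 0 (-1) \<le> psi 0 p"
    by (rule deriv_within_nonneg_inc[OF psi_d[of 0]]) (use p in auto)
  ultimately have "psi 0 p = psi 0 (-1)" by simp
  then show ?thesis using Hp_m1 by (simp add: psi_m1)
qed

lemma mono_facts:
  assumes \<mu>: "\<mu> \<ge> 0" and rp: "\<forall>p\<in>{-1..0}. dI \<rho> p \<le> 0"
    and nn: "\<forall>p\<in>{-1..0}. psi \<mu> p \<ge> 0"
  shows "\<And>x y. -1 \<le> x \<Longrightarrow> x \<le> y \<Longrightarrow> y \<le> 0 \<Longrightarrow> Phi \<mu> x \<le> Phi \<mu> y"
    and "\<And>x. x \<in> {-1..0} \<Longrightarrow> Phi \<mu> x \<ge> 0"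
    and "\<And>x y. -1 \<le> x \<Longrightarrow> x \<le> y \<Longrightarrow> y \<le> 0 \<Longrightarrow> psi \<mu> y \<le> psi \<mu> x"
proof -
  show inc: "\<And>x y. -1 \<le> x \<Longrightarrow> x \<le> y \<Longrightarrow> y \<le> 0 \<Longrightarrow> Phi \<mu> x \<le> Phi \<mu> y"
    by (rule deriv_within_nonneg_inc[OF phi_d[OF \<mu>]]) (use nn Hp3_nn in \<open>auto intro!: mult_nonneg_nonneg\<close>)
  show pos: "\<And>x. x \<in> {-1..0} \<Longrightarrow> Phi \<mu> x \<ge> 0"
    using inc[of "-1"] phi_m1[OF \<mu>] by auto
  show "\<And>x y. -1 \<le> x \<Longrightarrow> x \<le> y \<Longrightarrow> y \<le> 0 \<Longrightarrow> psi \<mu> y \<le> psi \<mu> x"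
  proof (rule deriv_within_nonpos_dec[OF psi_d[OF \<mu>]])
    fix t :: real assume t: "t \<in> {-1..0}"
    have "\<mu> * dI \<rho> t \<le> 0" using rp t \<mu> by (simp add: mult_nonneg_nonpos)
    then show "\<mu> * dI \<rho> t * Phi \<mu> t \<le> 0" using pos[OF t] by (simp add: mult_nonpos_nonneg)
  qed auto
qed

lemma phi0_pos:
  assumes \<mu>: "\<mu> \<ge> 0" and rp: "\<forall>p\<in>{-1..0}. dI \<rho> p \<le> 0"
    and nn: "\<forall>p\<in>{-1..0}. psi \<mu> p \<ge> 0"
  shows "Phi \<mu> 0 > 0"
proof (rule ccontr)
  assume "\<not> Phi \<mu> 0 > 0"
  then have z: "\<And>x. x \<in> {-1..0} \<Longrightarrow> Phi \<mu> x = 0"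
    using mono_facts[OF assms] by (smt (verit) atLeastAtMost_iff)
  have d1: "(Phi \<mu> has_real_derivative (dI H (-1))^3 * psi \<mu> (-1)) (at (-1) within {-1..0})"
    using phi_d[OF \<mu>, of "-1"] by simp
  have "(dI H (-1))^3 * psi \<mu> (-1) = 1" using Hp_m1 by (simp add: psi_m1[OF \<mu>])
  then have d1': "(Phi \<mu> has_real_derivative 1) (at (-1) within {-1..0})" using d1 by simp
  have "((\<lambda>_. 0::real) has_real_derivative 1) (at (-1) within {-1..0})"
    by (rule has_field_derivative_transform_within[OF d1' zero_less_one]) (use z in auto)
  then have "((\<lambda>_. 0::real) has_vector_derivative 1) (at (-1) within {-1..0})"
    by (simp add: has_real_derivative_iff_has_vector_derivative)
  then have "vector_derivative (\<lambda>_. 0::real) (at (-1) within {-1..0}) = 1"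
    by (intro vector_derivative_within_closed_interval) auto
  moreover have "vector_derivative (\<lambda>_. 0::real) (at (-1) within {-1..0}) = 0"
    by (intro vector_derivative_within_closed_interval) (auto intro: derivative_intros)
  ultimately show False by simp
qed

lemma A_pos_if_zero:
  assumes \<mu>: "\<mu> > 0" and rp: "\<forall>p\<in>{-1..0}. dI \<rho> p \<le> 0" and r0: "\<rho> 0 > 0"
    and nn: "\<forall>p\<in>{-1..0}. psi \<mu> p \<ge> 0" and p0: "p0 \<in> {-1..0}" "psi \<mu> p0 \<le> 0"
  shows "A_fun H \<rho> Phi \<mu> > 0"
proof -
  have m: "\<mu> \<ge> 0" using \<mu> by simp
  have "psi \<mu> 0 \<le> psi \<mu> p0" using mono_facts(3)[OF m rp nn, of p0 0] p0 by auto
  then have "psi \<mu> 0 \<le> 0" using p0 by simp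
  moreover have "\<mu> * \<rho> 0 * Phi \<mu> 0 > 0" using \<mu> r0 phi0_pos[OF m rp nn] by simp
  ultimately show ?thesis unfolding A_eq by simp
qed

lemma psi_pos_cr:
  assumes cr: "is_mu_cr H \<rho> Phi \<mu>c" and rp: "\<forall>p\<in>{-1..0}. dI \<rho> p \<le> 0" and r0: "\<rho> 0 > 0"
  shows "\<forall>p\<in>{-1..0}. psi \<mu>c p > 0"
proof (rule ccontr)
  assume neg: "\<not> (\<forall>p\<in>{-1..0}. psi \<mu>c p > 0)"
  have mc: "\<mu>c > 0" "A_fun H \<rho> Phi \<mu>c = 0" "\<And>\<nu>. 0 < \<nu> \<Longrightarrow> \<nu> < \<mu>c \<Longrightarrow> A_fun H \<rho> Phi \<nu> \<noteq> 0"
    using cr unfolding is_mu_cr_def by auto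
  define B where "B = {\<mu>\<in>{0..\<mu>c}. \<exists>p\<in>{-1..0}. psi \<mu> p \<le> 0}"
  have cB: "\<mu>c \<in> B" using neg mc(1) by (auto simp: B_def not_less)
  have Bne: "B \<noteq> {}" using cB by auto
  have Bbd: "bdd_below B" by (auto simp: B_def bdd_below_def)
  define m where "m = Inf B"
  have mle: "\<And>\<mu>. \<mu> \<in> B \<Longrightarrow> m \<le> \<mu>" unfolding m_def using Bbd by (simp add: cInf_lower)
  have m0: "m \<ge> 0" unfolding m_def using Bne by (rule cInf_greatest) (auto simp: B_def)
  have mmc: "m \<le> \<mu>c" using mle[OF cB] .
  have mc0: "\<mu>c \<ge> 0" using mc(1) by simp
  obtain L where L0: "\<forall>\<mu>\<in>{0..\<mu>c}. \<forall>\<nu>\<in>{0..\<mu>c}. \<forall>p\<in>{-1..0}.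
     \<bar>Phi \<mu> p - Phi \<nu> p\<bar> \<le> L * \<bar>\<mu> - \<nu>\<bar> \<and> \<bar>psi \<mu> p - psi \<nu> p\<bar> \<le> L * \<bar>\<mu> - \<nu>\<bar>"
    using lip_bound[OF mc0] by (elim exE)
  note L = L0[rule_format]
  obtain x0 where x0: "x0 \<in> {-1..0}" "\<And>y. y \<in> {-1..0} \<Longrightarrow> psi m x0 \<le> psi m y"
    using continuous_attains_inf[of "{-1..0}" "psi m"] psi_cont[OF m0] by auto
  have hx0: "psi m x0 \<le> 0"
  proof (rule field_le_epsilon)
    fix e :: real assume e: "e > 0"
    define e' where "e' = e / (\<bar>L\<bar> + 1)"
    have e': "e' > 0" using e by (simp add: e'_def add_pos_nonneg)
    obtain \<mu> where \<mu>: "\<mu> \<in> B" "\<mu> < m + e'"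
      using cInf_lessD[OF Bne, of "m + e'"] e' by (auto simp: m_def)
    obtain p where p: "p \<in> {-1..0}" "psi \<mu> p \<le> 0" using \<mu>(1) by (auto simp: B_def)
    have \<mu>r: "\<mu> \<in> {0..\<mu>c}" using \<mu>(1) by (auto simp: B_def)
    have "\<bar>psi \<mu> p - psi m p\<bar> \<le> L * \<bar>\<mu> - m\<bar>" using L[OF \<mu>r _ p(1), of m] m0 mmc by auto
    also have "\<dots> \<le> \<bar>L\<bar> * e'"
    proof -
      have "\<bar>\<mu> - m\<bar> \<le> e'" using \<mu> mle[OF \<mu>(1)] by auto
      have "L * \<bar>\<mu> - m\<bar> \<le> \<bar>L\<bar> * \<bar>\<mu> - m\<bar>" by (intro mult_right_mono) auto
      also have "\<dots> \<le> \<bar>L\<bar> * e'" using \<open>\<bar>\<mu> - m\<bar> \<le> e'\<close> by (intro mult_left_mono) auto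
      finally show ?thesis .
    qed
    also have "\<dots> \<le> e" using e by (simp add: e'_def field_simps)
    finally have "psi m p \<le> e" using p by linarith
    then show "psi m x0 \<le> 0 + e" using x0(2)[OF p(1)] by simp
  qed
  then have mB: "m \<in> B" using x0(1) m0 mmc by (auto simp: B_def)
  have mpos: "m > 0"
  proof (rule ccontr)
    assume "\<not> m > 0"
    then have "m = 0" using m0 by simp
    moreover obtain p where "p \<in> {-1..0}" "psi m p \<le> 0" using mB by (auto simp: B_def)
    ultimately show False using psi0_pos[of p] by simp
  qed
  have below: "\<And>\<mu> p. 0 \<le> \<mu> \<Longrightarrow> \<mu> < m \<Longrightarrow> p \<in> {-1..0} \<Longrightarrow> psi \<mu> p > 0"
  proof (rule ccontr)
    fix \<mu> p assume a: "0 \<le> \<mu>" "\<mu> < m" "p \<in> {-1..0}" "\<not> psi \<mu> p > 0"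
    then have "\<mu> \<in> B" using mmc by (auto simp: B_def intro!: bexI[of _ p])
    then show False using mle[OF \<open>\<mu> \<in> B\<close>] a(2) by simp
  qed
  have nn: "\<forall>p\<in>{-1..0}. psi m p \<ge> 0"
  proof (rule ballI, rule ccontr)
    fix p assume p: "p \<in> {-1..(0::real)}" and "\<not> psi m p \<ge> 0"
    then have np: "psi m p < 0" by simp
    define d where "d = min (m / 2) (- psi m p / (2 * (\<bar>L\<bar> + 1)))"
    have d: "d > 0" "d \<le> m / 2" "d \<le> - psi m p / (2 * (\<bar>L\<bar> + 1))"
    proof -
      have q: "- psi m p / (2 * (\<bar>L\<bar> + 1)) > 0"
        by (intro divide_pos_pos) (use np in \<open>auto intro: add_nonneg_pos\<close>)
      show "d > 0" unfolding d_def using mpos q by (auto simp del: minus_divide_left)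
      show "d \<le> m / 2" "d \<le> - psi m p / (2 * (\<bar>L\<bar> + 1))"
        unfolding d_def by (rule min.cobounded1, rule min.cobounded2)
    qed
    have r: "m - d \<in> {0..\<mu>c}" using d mmc by auto
    have "\<bar>psi (m - d) p - psi m p\<bar> \<le> L * \<bar>(m - d) - m\<bar>" using L[OF r _ p, of m] m0 mmc by auto
    also have "\<dots> \<le> \<bar>L\<bar> * d" using d by (simp add: abs_mult)
    also have "\<dots> \<le> (\<bar>L\<bar> + 1) * d" using d by (simp add: mult_right_mono)
    also have "\<dots> \<le> (\<bar>L\<bar> + 1) * (- psi m p / (2 * (\<bar>L\<bar> + 1)))"
      using d by (intro mult_left_mono) auto
    also have "\<dots> = - psi m p / 2" by (simp add: field_simps add_pos_nonneg)
    finally have "psi (m - d) p < 0" using np by linarith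
    moreover have "psi (m - d) p > 0" using below[of "m - d" p] d p by auto
    ultimately show False by simp
  qed
  have Am: "A_fun H \<rho> Phi m > 0"
    by (rule A_pos_if_zero[OF mpos rp r0 nn x0(1)]) (rule hx0)
  have A0: "A_fun H \<rho> Phi 0 < 0" unfolding A_eq using psi0_pos[of 0] by simp
  have cA: "continuous_on {0..m} (A_fun H \<rho> Phi)"
  proof -
    have "continuous_on {0..m} (\<lambda>\<mu>. - psi \<mu> 0 + \<mu> * \<rho> 0 * Phi \<mu> 0)"
      using lip_cont[OF m0, of 0] by (auto intro!: continuous_intros)
    then show ?thesis unfolding A_eq[abs_def] .
  qed
  obtain \<nu> where \<nu>: "0 \<le> \<nu>" "\<nu> \<le> m" "A_fun H \<rho> Phi \<nu> = 0"
    using IVT'[of "A_fun H \<rho> Phi" 0 0 m] A0 Am m0 cA by auto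
  have "\<nu> \<noteq> 0" using \<nu> A0 by auto
  moreover have "\<nu> \<noteq> m" using \<nu> Am by auto
  ultimately show False using mc(3)[of \<nu>] \<nu> mmc by auto
qed

end


lemma Rbar_iff: "x \<in> Rbar \<longleftrightarrow> snd x \<in> {-1..0}"
  by (cases x) (auto simp: Rbar_def)

lemma Ropen_iff: "x \<in> Ropen \<longleftrightarrow> snd x \<in> {-1<..<0}"
  by (cases x) (auto simp: Ropen_def)

lemma pd_simps2:
  "pd [Dq] f = pdq f" "pd [Dp] f = pdp f" "pd [Dq, Dq] f = pdq (pdq f)"
  "pd [Dq, Dp] f = pdq (pdp f)" "pd [Dp, Dq] f = pdp (pdq f)" "pd [Dp, Dp] f = pdp (pdp f)"
  by (simp_all add: pdir_def)

lemma cont_slice: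
  assumes "continuous_on Rbar f"
  shows "continuous_on {-1..0} (\<lambda>t. f (q, t))"
proof -
  have "continuous_on {-1..0} (\<lambda>t. (q, t))" by (intro continuous_intros)
  moreover have "(\<lambda>t. (q, t)) ` {-1..0} \<subseteq> Rbar" by (auto simp: Rbar_def)
  ultimately show ?thesis using continuous_on_compose2[OF assms] by blast
qed

lemma cont_snd_comp:
  assumes "continuous_on {-1..0} g"
  shows "continuous_on Rbar (\<lambda>x. g (snd x))"
proof -
  have "snd ` Rbar \<subseteq> {-1..0}" by (auto simp: Rbar_def)
  then show ?thesis using continuous_on_compose2[OF assms continuous_on_snd[OF continuous_on_id]] by blast
qed

lemma real_vd_works:
  fixes f :: "real \<Rightarrow> real"
  assumes "f differentiable F"
  shows "(f has_real_derivative vector_derivative f F) F"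
  using vector_derivative_works[of f F] assms
  by (simp add: has_real_derivative_iff_has_vector_derivative)

locale pde_setup = ode_setup +
  fixes w :: "real \<times> real \<Rightarrow> real" and F :: real
  assumes wX: "in_X \<alpha> w" and sol: "height_eq H \<rho> w F" and H0: "H 0 = 1"
begin

abbreviation I where "I \<equiv> {-1..0::real}"

lemma strip: "C_ka_strip 3 \<alpha> w" using wX by (simp add: in_X_def)

lemma w_dq:
  assumes "length ds < 3" "p \<in> I"
  shows "((\<lambda>s. pd ds w (s, p)) has_real_derivative pd (Dq # ds) w (s, p)) (at s)"
proof -
  have "(\<lambda>s. pd ds w (s, p)) differentiable (at s)"
    using strip assms unfolding C_ka_strip_def Rbar_def by force
  then show ?thesis using real_vd_works by (simp add: pdir_def pdq_def)
qed

lemma w_dp: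
  assumes "length ds < 3" "p \<in> I"
  shows "((\<lambda>t. pd ds w (q, t)) has_real_derivative pd (Dp # ds) w (q, p)) (at p within I)"
proof -
  have "(\<lambda>t. pd ds w (q, t)) differentiable (at p within I)"
    using strip assms unfolding C_ka_strip_def Rbar_def by force
  then show ?thesis using real_vd_works by (simp add: pdir_def pdp_def)
qed

lemma w_cont: "length ds \<le> 3 \<Longrightarrow> continuous_on Rbar (pd ds w)"
  using strip unfolding C_ka_strip_def by blast

lemma w_decay: "length ds \<le> 2 \<Longrightarrow> e > 0 \<Longrightarrow> \<exists>M. \<forall>q p. M \<le> \<bar>q\<bar> \<and> -1 \<le> p \<and> p \<le> 0 \<longrightarrow> \<bar>pd ds w (q, p)\<bar> < e"
  using wX unfolding in_X_def by blast

lemma w_even: "w (-q, p) = w (q, p)" using wX unfolding in_X_def by blast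

lemma w_bot: "w (q, -1) = 0" using wX unfolding in_X_def by blast

lemma wq_d: "p \<in> I \<Longrightarrow> ((\<lambda>s. w (s, p)) has_real_derivative pdq w (s, p)) (at s)"
  using w_dq[of "[]"] by (simp add: pdir_def)
lemma wqq_d: "p \<in> I \<Longrightarrow> ((\<lambda>s. pdq w (s, p)) has_real_derivative pdq (pdq w) (s, p)) (at s)"
  using w_dq[of "[Dq]"] by (simp add: pdir_def)
lemma wpq_d: "p \<in> I \<Longrightarrow> ((\<lambda>s. pdp w (s, p)) has_real_derivative pdq (pdp w) (s, p)) (at s)"
  using w_dq[of "[Dp]"] by (simp add: pdir_def)
lemma wp_d: "p \<in> I \<Longrightarrow> ((\<lambda>t. w (q, t)) has_real_derivative pdp w (q, p)) (at p within I)"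
  using w_dp[of "[]"] by (simp add: pdir_def)
lemma wqp_d: "p \<in> I \<Longrightarrow> ((\<lambda>t. pdq w (q, t)) has_real_derivative pdp (pdq w) (q, p)) (at p within I)"
  using w_dp[of "[Dq]"] by (simp add: pdir_def)
lemma wpp_d: "p \<in> I \<Longrightarrow> ((\<lambda>t. pdp w (q, t)) has_real_derivative pdp (pdp w) (q, p)) (at p within I)"
  using w_dp[of "[Dp]"] by (simp add: pdir_def)

lemma c_w: "continuous_on Rbar w" using w_cont[of "[]"] by simp
lemma c_wq: "continuous_on Rbar (pdq w)" using w_cont[of "[Dq]"] by (simp add: pdir_def)
lemma c_wp: "continuous_on Rbar (pdp w)" using w_cont[of "[Dp]"] by (simp add: pdir_def)
lemma c_wqq: "continuous_on Rbar (pdq (pdq w))" using w_cont[of "[Dq,Dq]"] by (simp add: pdir_def)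
lemma c_wqp: "continuous_on Rbar (pdq (pdp w))" using w_cont[of "[Dq,Dp]"] by (simp add: pdir_def)

lemma H_d: "p \<in> I \<Longrightarrow> (H has_real_derivative dI H p) (at p within I)"
proof -
  assume p: "p \<in> I"
  have "((dI ^^ 0) H) differentiable (at p within I)"
    using H_reg p unfolding C_ka_I_def by (metis zero_less_numeral)
  then show ?thesis using real_vd_works by (simp add: dI_def)
qed

lemma Hp_d: "p \<in> I \<Longrightarrow> (dI H has_real_derivative dI (dI H) p) (at p within I)"
proof -
  assume p: "p \<in> I"
  have "((dI ^^ 1) H) differentiable (at p within I)"
    using H_reg p unfolding C_ka_I_def by (metis One_nat_def Suc_less_eq numeral_3_eq_3 zero_less_Suc)
  then show ?thesis using real_vd_works by (simp add: dI_def)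
qed

lemma rho_cont: "continuous_on I \<rho>"
proof -
  have "\<forall>x\<in>I. ((dI ^^ 0) \<rho>) differentiable (at x within I)"
    using rho_reg unfolding C_ka_I_def by (metis zero_less_numeral)
  then show ?thesis
    by (auto simp: continuous_on_eq_continuous_within intro: differentiable_imp_continuous_within)
qed

definition h where "h x = H (snd x) + w x"
definition a where "a q p = dI H p + pdp w (q, p)"
definition b where "b q p = pdq w (q, p)"
definition E where "E q p = (1 + (b q p)\<^sup>2) / (2 * (a q p)\<^sup>2) - 1 / (2 * (dI H p)\<^sup>2)"
definition C where "C q p = (pdq (pdq w) (q, p) * a q p - b q p * pdq (pdp w) (q, p)) / (a q p)\<^sup>2"
definition \<mu> where "\<mu> = 1 / F\<^sup>2"

lemma pdq_h: "p \<in> I \<Longrightarrow> pdq h (s, p) = b s p"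
proof -
  assume p: "p \<in> I"
  have "((\<lambda>s. H p + w (s, p)) has_real_derivative 0 + pdq w (s, p)) (at s)"
    by (intro DERIV_add DERIV_const wq_d[OF p])
  then show ?thesis unfolding pdq_def h_def b_def
    by (simp add: has_real_derivative_iff_has_vector_derivative vector_derivative_at)
qed

lemma pdp_h: "p \<in> I \<Longrightarrow> pdp h (q, p) = a q p"
proof -
  assume p: "p \<in> I"
  have "((\<lambda>t. H t + w (q, t)) has_real_derivative dI H p + pdp w (q, p)) (at p within I)"
    by (intro DERIV_add H_d wp_d p)
  then show ?thesis unfolding pdp_def h_def a_def
    by (intro vector_derivative_within_closed_interval) (use p in \<open>auto simp: has_real_derivative_iff_has_vector_derivative\<close>)
qed


lemma DERIV_differentiable: "(f has_real_derivative D) Fl \<Longrightarrow> f differentiable Fl"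
  by (auto simp: differentiable_def has_field_derivative_def)

lemma hh: "(\<lambda>x. H (snd x) + w x) = h" by (rule ext) (simp add: h_def)

lemma sol_F: "F > 0" using sol unfolding height_eq_def Let_def by simp

lemma sol_int: "\<forall>x\<in>Ropen.
            pdp (\<lambda>y. - (1 + (pdq h y)\<^sup>2) / (2 * (pdp h y)\<^sup>2) + 1 / (2 * (dI H (snd y))\<^sup>2)) x
          + pdq (\<lambda>y. pdq h y / pdp h y) x
          - (1 / F\<^sup>2) * dI \<rho> (snd x) * (h x - H (snd x)) = 0"
  using sol unfolding height_eq_def Let_def hh by blast

lemma sol_top: "\<forall>q. (1 + (pdq h (q, 0))\<^sup>2) / (2 * (pdp h (q, 0))\<^sup>2) - 1 / (2 * (dI H 0)\<^sup>2)
              + (1 / F\<^sup>2) * \<rho> 0 * (h (q, 0) - 1) = 0"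
  using sol unfolding height_eq_def Let_def hh by blast

lemma sol_delta: "\<exists>\<delta>>0. \<forall>x\<in>Ropen. \<delta> \<le> pdp h x"
  using sol unfolding height_eq_def Let_def hh by blast

lemma mu_pos: "\<mu> > 0" using sol_F by (simp add: \<mu>_def)

lemma a_cont: "continuous_on I (a q)"
  unfolding a_def[abs_def] using Hp_cont cont_slice[OF c_wp, of q] by (intro continuous_intros)

lemma a_lb: "\<exists>\<delta>>0. \<forall>q. \<forall>p\<in>I. \<delta> \<le> a q p"
proof -
  obtain \<delta> where d: "\<delta> > 0" "\<forall>x\<in>Ropen. \<delta> \<le> pdp h x" using sol_delta by blast
  have "\<delta> \<le> a q p" if p: "p \<in> I" for q p
  proof (rule continuous_ge_on_closure[where S="{-1<..<0}" and f="a q"])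
    show "continuous_on (closure {-1<..<0}) (a q)" using a_cont by simp
    show "p \<in> closure {-1<..<0::real}" using p by simp
    fix t :: real assume t: "t \<in> {-1<..<0}"
    then have "\<delta> \<le> pdp h (q, t)" using d(2) by (auto simp: Ropen_def)
    then show "\<delta> \<le> a q t" using pdp_h[of t q] t by simp
  qed
  then show ?thesis using d(1) by blast
qed

lemma a_pos: "p \<in> I \<Longrightarrow> a q p > 0"
  using a_lb by (meson less_le_trans)

lemma Hp_pos: "p \<in> I \<Longrightarrow> dI H p > 0" using H_p by blast

definition Ep where "Ep q p = vector_derivative (E q) (at p within I)"

lemma E_d: "p \<in> I \<Longrightarrow> (E q has_real_derivative Ep q p) (at p within I)"
proof -
  assume p: "p \<in> I"
  have db: "(b q) differentiable (at p within I)"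
    unfolding b_def[abs_def] by (rule DERIV_differentiable[OF wqp_d[OF p]])
  have da: "(a q) differentiable (at p within I)"
    unfolding a_def[abs_def] by (intro differentiable_add DERIV_differentiable[OF Hp_d[OF p]] DERIV_differentiable[OF wpp_d[OF p]])
  have dH: "(dI H) differentiable (at p within I)" by (rule DERIV_differentiable[OF Hp_d[OF p]])
  have "(E q) differentiable (at p within I)"
    unfolding E_def[abs_def]
    using db da dH a_pos[OF p, of q] Hp_pos[OF p]
    by (intro differentiable_diff differentiable_divide differentiable_add differentiable_const
          differentiable_power differentiable_mult) auto
  then show ?thesis unfolding Ep_def by (rule real_vd_works)
qed

lemma ba_dq: "p \<in> I \<Longrightarrow> ((\<lambda>s. b s p / a s p) has_real_derivative C q p) (at q)"
proof -
  assume p: "p \<in> I"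
  have da: "((\<lambda>s. a s p) has_real_derivative 0 + pdq (pdp w) (q, p)) (at q)"
    unfolding a_def by (intro DERIV_add DERIV_const wpq_d[OF p])
  have db: "((\<lambda>s. b s p) has_real_derivative pdq (pdq w) (q, p)) (at q)"
    unfolding b_def by (rule wqq_d[OF p])
  show ?thesis
    by (rule DERIV_cong[OF DERIV_divide[OF db da]])
       (use a_pos[OF p, of q] in \<open>simp_all add: C_def power2_eq_square\<close>)
qed

lemma eq_int:
  assumes p: "p \<in> {-1<..<0}"
  shows "Ep q p = C q p - \<mu> * dI \<rho> p * w (q, p)"
proof -
  have pI: "p \<in> I" using p by auto
  let ?G = "\<lambda>y. - (1 + (pdq h y)\<^sup>2) / (2 * (pdp h y)\<^sup>2) + 1 / (2 * (dI H (snd y))\<^sup>2)"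
  let ?K = "\<lambda>y. pdq h y / pdp h y"
  have "(q, p) \<in> Ropen" using p by (simp add: Ropen_def)
  then have e: "pdp ?G (q, p) + pdq ?K (q, p) - (1 / F\<^sup>2) * dI \<rho> p * (h (q, p) - H p) = 0"
    using sol_int by fastforce
  have 1: "pdp ?G (q, p) = - Ep q p"
  proof -
    have "((\<lambda>t. - E q t) has_vector_derivative - Ep q p) (at p within I)"
      using DERIV_minus[OF E_d[OF pI, of q]] by (simp add: has_real_derivative_iff_has_vector_derivative)
    then have "((\<lambda>t. ?G (q, t)) has_vector_derivative - Ep q p) (at p within I)"
    proof (rule has_vector_derivative_transform_within[OF _ zero_less_one pI])
      fix t assume t: "t \<in> I"
      show "- E q t = ?G (q, t)"
        using pdq_h[OF t, of q] pdp_h[OF t, of q] by (simp add: E_def minus_divide_left)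
    qed
    then show ?thesis unfolding pdp_def
      by (intro vector_derivative_within_closed_interval) (use pI in auto)
  qed
  have 2: "pdq ?K (q, p) = C q p"
  proof -
    have "(\<lambda>s. ?K (s, p)) = (\<lambda>s. b s p / a s p)"
      using pdq_h[OF pI] pdp_h[OF pI] by (simp add: fun_eq_iff)
    then show ?thesis unfolding pdq_def using ba_dq[OF pI, of q]
      by (simp add: has_real_derivative_iff_has_vector_derivative vector_derivative_at)
  qed
  have 3: "h (q, p) - H p = w (q, p)" by (simp add: h_def)
  show ?thesis using e 1 2 3 by (simp add: \<mu>_def)
qed

lemma eq_top: "E q 0 = - \<mu> * \<rho> 0 * w (q, 0)"
proof -
  have "(1 + (pdq h (q, 0))\<^sup>2) / (2 * (pdp h (q, 0))\<^sup>2) - 1 / (2 * (dI H 0)\<^sup>2)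
              + (1 / F\<^sup>2) * \<rho> 0 * (h (q, 0) - 1) = 0" using sol_top by blast
  moreover have "h (q, 0) - 1 = w (q, 0)" by (simp add: h_def H0)
  ultimately show ?thesis using pdq_h[of 0 q] pdp_h[of 0 q] by (simp add: E_def \<mu>_def)
qed


abbreviation \<phi> where "\<phi> \<equiv> Phi \<mu>"
abbreviation \<psi> where "\<psi> \<equiv> psi \<mu>"

lemma mu_nn: "\<mu> \<ge> 0" using mu_pos by simp

lemma phi_cont: "continuous_on I \<phi>" by (rule deriv_within_cont[OF phi_d[OF mu_nn]])
lemma psi_cont': "continuous_on I \<psi>" by (rule psi_cont[OF mu_nn])
lemma E_cont: "continuous_on I (E q)" by (rule deriv_within_cont[OF E_d])
lemma b_cont: "continuous_on I (b q)" unfolding b_def using cont_slice[OF c_wq] .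
lemma wp_cont: "continuous_on I (\<lambda>t. pdp w (q, t))" using cont_slice[OF c_wp] .
lemma w_cont': "continuous_on I (\<lambda>t. w (q, t))" using cont_slice[OF c_w] .

lemma C_cont: "continuous_on I (C q)"
proof -
  have "continuous_on I (\<lambda>t. (pdq (pdq w) (q, t) * a q t - b q t * pdq (pdp w) (q, t)) / (a q t)\<^sup>2)"
  proof -
    have "\<forall>t\<in>I. (a q t)\<^sup>2 \<noteq> 0" using a_pos[of _ q] by force
    then show ?thesis
      using cont_slice[OF c_wqq, of q] cont_slice[OF c_wqp, of q] a_cont[of q] b_cont[of q]
      by (intro continuous_intros) auto
  qed
  then show ?thesis unfolding C_def[abs_def] .
qed

definition M where "M q = integral I (\<lambda>p. \<phi> p * (b q p / a q p))"
definition Mp where "Mp q = integral I (\<lambda>p. \<phi> p * C q p)"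
definition G where "G q = integral I (\<lambda>p. \<psi> p * ((dI H p)^3 * E q p + pdp w (q, p)))"

lemma hint: "continuous_on I (f :: real \<Rightarrow> real) \<Longrightarrow> (f has_integral integral I f) I"
  by (intro integrable_integral integrable_continuous_interval)

lemma identity: "A_fun H \<rho> Phi \<mu> * w (q, 0) + Mp q + G q = 0"
proof -
  define T1 where "T1 = integral I (\<lambda>p. (dI H p)^3 * \<psi> p * E q p)"
  define T4 where "T4 = integral I (\<lambda>p. dI \<rho> p * \<phi> p * w (q, p))"
  define T5 where "T5 = integral I (\<lambda>p. \<psi> p * pdp w (q, p))"
  have i1: "((\<lambda>p. (dI H p)^3 * \<psi> p * E q p) has_integral T1) I"
    unfolding T1_def using Hp_cont psi_cont' E_cont[of q] by (intro hint continuous_intros)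
  have i3: "((\<lambda>p. \<phi> p * C q p) has_integral Mp q) I"
    unfolding Mp_def using phi_cont C_cont[of q] by (intro hint continuous_intros)
  have i4: "((\<lambda>p. dI \<rho> p * \<phi> p * w (q, p)) has_integral T4) I"
    unfolding T4_def using rp_cont phi_cont w_cont'[of q] by (intro hint continuous_intros)
  have i5: "((\<lambda>p. \<psi> p * pdp w (q, p)) has_integral T5) I"
    unfolding T5_def using psi_cont' wp_cont[of q] by (intro hint continuous_intros)
  have d1: "((\<lambda>p. \<phi> p * E q p) has_vector_derivative (dI H p)^3 * \<psi> p * E q p + \<phi> p * Ep q p) (at p within I)"
    if p: "p \<in> I" for p
    unfolding has_real_derivative_iff_has_vector_derivative[symmetric]
    by (rule DERIV_cong[OF DERIV_mult[OF phi_d[OF mu_nn p] E_d[OF p]]]; simp add: algebra_simps)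
  have f1: "((\<lambda>p. (dI H p)^3 * \<psi> p * E q p + \<phi> p * Ep q p) has_integral (\<phi> 0 * E q 0 - \<phi> (-1) * E q (-1))) I"
    using fundamental_theorem_of_calculus[of "-1" 0, OF _ d1] by simp
  have f1': "((\<lambda>p. (dI H p)^3 * \<psi> p * E q p + (\<phi> p * C q p - \<mu> * (dI \<rho> p * \<phi> p * w (q, p)))) has_integral (\<phi> 0 * E q 0)) I"
  proof -
    have "((\<lambda>p. (dI H p)^3 * \<psi> p * E q p + \<phi> p * Ep q p) has_integral (\<phi> 0 * E q 0)) I"
      using f1 by (simp add: phi_m1[OF mu_nn])
    moreover have "((\<lambda>p. (dI H p)^3 * \<psi> p * E q p + \<phi> p * Ep q p) has_integral (\<phi> 0 * E q 0)) I
      \<longleftrightarrow> ((\<lambda>p. (dI H p)^3 * \<psi> p * E q p + (\<phi> p * C q p - \<mu> * (dI \<rho> p * \<phi> p * w (q, p)))) has_integral (\<phi> 0 * E q 0)) I"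
    proof (rule has_integral_spike_finite_eq[of "{-1, 0}"])
      fix p assume "p \<in> I - {-1, 0}"
      then have "p \<in> {-1<..<0}" by auto
      then show "(dI H p)^3 * \<psi> p * E q p + (\<phi> p * C q p - \<mu> * (dI \<rho> p * \<phi> p * w (q, p)))
          = (dI H p)^3 * \<psi> p * E q p + \<phi> p * Ep q p"
        using eq_int[of p q] by (simp add: right_diff_distrib)
    qed simp
    ultimately show ?thesis by blast
  qed
  have f1'': "((\<lambda>p. (dI H p)^3 * \<psi> p * E q p + (\<phi> p * C q p - \<mu> * (dI \<rho> p * \<phi> p * w (q, p)))) has_integral (T1 + (Mp q - \<mu> * T4))) I"
    by (intro has_integral_add has_integral_diff has_integral_mult_right i1 i3 i4)
  have e1: "\<phi> 0 * E q 0 = T1 + (Mp q - \<mu> * T4)" using has_integral_unique[OF f1' f1''] .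
  have d2: "((\<lambda>p. \<psi> p * w (q, p)) has_vector_derivative \<mu> * (dI \<rho> p * \<phi> p * w (q, p)) + \<psi> p * pdp w (q, p)) (at p within I)"
    if p: "p \<in> I" for p
    unfolding has_real_derivative_iff_has_vector_derivative[symmetric]
    by (rule DERIV_cong[OF DERIV_mult[OF psi_d[OF mu_nn p] wp_d[OF p]]]; simp add: algebra_simps)
  have f2: "((\<lambda>p. \<mu> * (dI \<rho> p * \<phi> p * w (q, p)) + \<psi> p * pdp w (q, p)) has_integral (\<psi> 0 * w (q, 0) - \<psi> (-1) * w (q, -1))) I"
    using fundamental_theorem_of_calculus[of "-1" 0, OF _ d2] by simp
  have f2': "((\<lambda>p. \<mu> * (dI \<rho> p * \<phi> p * w (q, p)) + \<psi> p * pdp w (q, p)) has_integral (\<mu> * T4 + T5)) I"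
    by (intro has_integral_add has_integral_mult_right i4 i5)
  have e2: "\<psi> 0 * w (q, 0) = \<mu> * T4 + T5" using has_integral_unique[OF f2 f2'] by (simp add: w_bot)
  have "((\<lambda>p. (dI H p)^3 * \<psi> p * E q p + \<psi> p * pdp w (q, p)) has_integral (T1 + T5)) I"
    by (intro has_integral_add i1 i5)
  moreover have "(\<lambda>p. (dI H p)^3 * \<psi> p * E q p + \<psi> p * pdp w (q, p)) = (\<lambda>p. \<psi> p * ((dI H p)^3 * E q p + pdp w (q, p)))"
    by (simp add: fun_eq_iff algebra_simps)
  ultimately have "G q = T1 + T5" unfolding G_def by (metis integral_unique)
  then show ?thesis using e1 e2 eq_top[of q] unfolding A_eq by (simp add: algebra_simps)
qed


lemma M_d: "(M has_real_derivative Mp q) (at q)"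
proof -
  let ?Cf = "\<lambda>y. (pdq (pdq w) y * (dI H (snd y) + pdp w y) - pdq w y * pdq (pdp w) y) / (dI H (snd y) + pdp w y)\<^sup>2"
  have nz: "\<forall>y\<in>Rbar. (dI H (snd y) + pdp w y)\<^sup>2 \<noteq> 0"
  proof
    fix y assume "y \<in> Rbar"
    then have "a (fst y) (snd y) > 0" using a_pos by (simp add: Rbar_iff)
    then show "(dI H (snd y) + pdp w y)\<^sup>2 \<noteq> 0" by (simp add: a_def)
  qed
  have cC: "continuous_on Rbar ?Cf"
    using c_wqq c_wqp c_wq c_wp cont_snd_comp[OF Hp_cont] nz by (intro continuous_intros) auto
  have cphi: "continuous_on Rbar (\<lambda>y. \<phi> (snd y))" by (rule cont_snd_comp[OF phi_cont])
  have c2: "continuous_on Rbar (\<lambda>y. \<phi> (snd y) * ?Cf y)" by (rule continuous_on_mult[OF cphi cC])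
  have c3: "continuous_on (UNIV \<times> cbox (-1) 0) (\<lambda>(x, t). \<phi> t * C x t)"
  proof -
    have "UNIV \<times> cbox (-1) (0::real) = Rbar" by (simp add: Rbar_def cbox_interval)
    moreover have "\<And>y. y \<in> Rbar \<Longrightarrow> (\<lambda>(x, t). \<phi> t * C x t) y = \<phi> (snd y) * ?Cf y"
      by (auto simp: C_def a_def b_def)
    ultimately show ?thesis using continuous_on_cong[THEN iffD1, OF refl _ c2] by metis
  qed
  have "((\<lambda>x. integral (cbox (-1) 0) (\<lambda>t. \<phi> t * (b x t / a x t))) has_field_derivative
          integral (cbox (-1) 0) (\<lambda>t. \<phi> t * C q t)) (at q within UNIV)"
  proof (rule leibniz_rule_field_derivative[OF _ _ c3])
    fix x t assume "t \<in> cbox (-1) (0::real)"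
    then have t: "t \<in> I" by (simp add: cbox_interval)
    show "((\<lambda>x. \<phi> t * (b x t / a x t)) has_field_derivative \<phi> t * C x t) (at x within UNIV)"
      by (intro DERIV_cmult ba_dq[OF t])
  next
    fix x
    have "continuous_on I (\<lambda>t. \<phi> t * (b x t / a x t))"
      using phi_cont b_cont[of x] a_cont[of x] a_pos[of _ x] by (intro continuous_intros) force+
    then show "(\<lambda>t. \<phi> t * (b x t / a x t)) integrable_on cbox (-1) 0"
      by (simp add: cbox_interval integrable_continuous_interval)
  qed auto
  then show ?thesis unfolding M_def[abs_def] Mp_def by (simp add: cbox_interval)
qed

lemma b_zero_at0: "p \<in> I \<Longrightarrow> b 0 p = 0"
proof -
  assume p: "p \<in> I"
  have d1: "((\<lambda>s. w (s, p)) has_real_derivative pdq w (0, p)) (at 0)" by (rule wq_d[OF p])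
  then have "((\<lambda>s. w (- s, p)) has_real_derivative - pdq w (0, p)) (at 0)"
    using DERIV_mirror[where f="\<lambda>s. w (s, p)" and x=0 and y="pdq w (0, p)"] d1 by simp
  then have "((\<lambda>s. w (s, p)) has_real_derivative - pdq w (0, p)) (at 0)" by (simp add: w_even)
  then have "pdq w (0, p) = - pdq w (0, p)" using DERIV_unique[OF d1] by blast
  then show ?thesis by (simp add: b_def)
qed

lemma M0: "M 0 = 0"
proof -
  have "integral I (\<lambda>p. \<phi> p * (b 0 p / a 0 p)) = integral I (\<lambda>p. 0)"
    by (rule integral_cong) (simp add: b_zero_at0)
  then show ?thesis by (simp add: M_def)
qed

lemma M_decay: "e > 0 \<Longrightarrow> \<exists>Q. \<forall>q\<ge>Q. \<bar>M q\<bar> \<le> e"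
proof -
  assume e: "e > 0"
  obtain \<delta> where d: "\<delta> > 0" "\<And>q p. p \<in> I \<Longrightarrow> \<delta> \<le> a q p" using a_lb by blast
  obtain P where P: "P \<ge> 0" "\<And>p. p \<in> I \<Longrightarrow> \<bar>\<phi> p\<bar> \<le> P" using cont_bound[OF phi_cont] by blast
  define e' where "e' = e * \<delta> / (P + 1)"
  have e': "e' > 0" using e d P by (simp add: e'_def)
  obtain Q where Q: "\<And>q p. Q \<le> \<bar>q\<bar> \<Longrightarrow> -1 \<le> p \<Longrightarrow> p \<le> 0 \<Longrightarrow> \<bar>pd [Dq] w (q, p)\<bar> < e'"
    using w_decay[of "[Dq]" e'] e' by auto
  show ?thesis
  proof (intro exI[of _ Q] allI impI)
    fix q assume q: "q \<ge> Q"
    have "norm (integral {-1..0} (\<lambda>p. \<phi> p * (b q p / a q p))) \<le> e * (0 - (-1))"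
    proof (rule integral_bound)
      show "continuous_on I (\<lambda>p. \<phi> p * (b q p / a q p))"
        using phi_cont b_cont[of q] a_cont[of q] a_pos[of _ q] by (intro continuous_intros) force+
      fix p assume p: "p \<in> I"
      have "Q \<le> \<bar>q\<bar>" using q abs_ge_self[of q] by linarith
      then have bq: "\<bar>b q p\<bar> \<le> e'" using Q[of q p] p by (simp add: b_def pdir_def)
      have ap: "a q p \<ge> \<delta>" using d p by blast
      have "\<bar>\<phi> p * (b q p / a q p)\<bar> = \<bar>\<phi> p\<bar> * \<bar>b q p\<bar> / a q p"
        using ap d by (simp add: abs_mult)
      also have "\<dots> \<le> P * e' / \<delta>"
        using ap d P(1) P(2)[OF p] bq by (intro frac_le mult_mono) auto
      also have "\<dots> \<le> e"
      proof -
        have P1: "P + 1 \<noteq> 0" using P(1) by simp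
        have "e' = (e / (P + 1)) * \<delta>" by (simp add: e'_def)
        then have "P * e' / \<delta> = P * (e / (P + 1))" using d(1) by simp
        also have "\<dots> = e * (P / (P + 1))" by simp
        finally have "P * e' / \<delta> = e * (P / (P + 1))" .
        also have "\<dots> \<le> e * 1" using e P by (intro mult_left_mono) auto
        finally show ?thesis by simp
      qed
      finally show "norm (\<phi> p * (b q p / a q p)) \<le> e" by simp
    qed simp
    then show "\<bar>M q\<bar> \<le> e" by (simp add: M_def)
  qed
qed

lemma key_alg:
  fixes a c bb :: real
  assumes "a > 0" "c > 0"
  shows "c^3 * ((1 + bb\<^sup>2) / (2 * a\<^sup>2) - 1 / (2 * c\<^sup>2)) + (a - c)
       = c^3 * bb\<^sup>2 / (2 * a\<^sup>2) + (a - c)\<^sup>2 * (2 * a + c) / (2 * a\<^sup>2)"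
  using assms by (simp add: field_simps power2_eq_square power3_eq_cube)

lemma integrand_eq: "p \<in> I \<Longrightarrow> (dI H p)^3 * E q p + pdp w (q, p)
   = (dI H p)^3 * (b q p)\<^sup>2 / (2 * (a q p)\<^sup>2) + (a q p - dI H p)\<^sup>2 * (2 * a q p + dI H p) / (2 * (a q p)\<^sup>2)"
proof -
  assume p: "p \<in> I"
  have "pdp w (q, p) = a q p - dI H p" by (simp add: a_def)
  then show ?thesis unfolding E_def using key_alg[OF a_pos[OF p, of q] Hp_pos[OF p], of "b q p"] by simp
qed

lemma integrand_nn: "p \<in> I \<Longrightarrow> (dI H p)^3 * E q p + pdp w (q, p) \<ge> (dI H p)^3 * (b q p)\<^sup>2 / (2 * (a q p)\<^sup>2)"
  and integrand_nn2: "p \<in> I \<Longrightarrow> (dI H p)^3 * (b q p)\<^sup>2 / (2 * (a q p)\<^sup>2) \<ge> 0"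
proof -
  assume p: "p \<in> I"
  have "(a q p - dI H p)\<^sup>2 * (2 * a q p + dI H p) / (2 * (a q p)\<^sup>2) \<ge> 0"
    using a_pos[OF p, of q] Hp_pos[OF p] by (intro divide_nonneg_pos mult_nonneg_nonneg) auto
  then show "(dI H p)^3 * E q p + pdp w (q, p) \<ge> (dI H p)^3 * (b q p)\<^sup>2 / (2 * (a q p)\<^sup>2)"
    using integrand_eq[OF p, of q] by linarith
next
  assume p: "p \<in> I"
  show "(dI H p)^3 * (b q p)\<^sup>2 / (2 * (a q p)\<^sup>2) \<ge> 0"
    using Hp_pos[OF p] by simp
qed

lemma G_nn: "\<forall>p\<in>I. \<psi> p \<ge> 0 \<Longrightarrow> G q \<ge> 0"
proof -
  assume nn: "\<forall>p\<in>I. \<psi> p \<ge> 0"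
  have "continuous_on I (\<lambda>p. \<psi> p * ((dI H p)^3 * E q p + pdp w (q, p)))"
    using psi_cont' Hp_cont E_cont[of q] wp_cont[of q] by (intro continuous_intros)
  then have "(\<lambda>p. \<psi> p * ((dI H p)^3 * E q p + pdp w (q, p))) integrable_on I"
    by (rule integrable_continuous_interval)
  then show ?thesis unfolding G_def
  proof (rule integral_nonneg)
    fix p assume p: "p \<in> I"
    have "0 \<le> (dI H p)^3 * E q p + pdp w (q, p)"
      using integrand_nn[OF p, of q] integrand_nn2[OF p, of q] by linarith
    then show "0 \<le> \<psi> p * ((dI H p)^3 * E q p + pdp w (q, p))" using nn p by simp
  qed
qed

lemma G0_imp:
  assumes nn: "\<forall>p\<in>I. \<psi> p \<ge> 0" and G0: "G q = 0" and p: "p \<in> I" and pp: "\<psi> p > 0"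
  shows "b q p = 0"
proof -
  let ?g = "\<lambda>p. \<psi> p * ((dI H p)^3 * E q p + pdp w (q, p))"
  have c: "continuous_on I ?g"
    using psi_cont' Hp_cont E_cont[of q] wp_cont[of q] by (intro continuous_intros)
  have gnn: "\<And>p. p \<in> I \<Longrightarrow> 0 \<le> ?g p"
  proof -
    fix p assume p: "p \<in> I"
    have "0 \<le> (dI H p)^3 * E q p + pdp w (q, p)"
      using integrand_nn[OF p, of q] integrand_nn2[OF p, of q] by linarith
    then show "0 \<le> ?g p" using nn p by simp
  qed
  have "(?g has_integral 0) I" using hint[OF c] G0 by (simp add: G_def)
  then have "?g p = 0"
    using has_integral_0_cbox_imp_0[of "-1" 0 ?g p] c gnn p by (auto simp: cbox_interval box_real)
  then have "(dI H p)^3 * E q p + pdp w (q, p) = 0" using pp by simp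
  then have "(dI H p)^3 * (b q p)\<^sup>2 / (2 * (a q p)\<^sup>2) \<le> 0" using integrand_nn[OF p, of q] by linarith
  then have "(dI H p)^3 * (b q p)\<^sup>2 / (2 * (a q p)\<^sup>2) = 0" using integrand_nn2[OF p, of q] by linarith
  then show ?thesis using Hp_pos[OF p] a_pos[OF p, of q] by simp
qed


lemma M_dec: "0 \<le> x \<Longrightarrow> x \<le> y \<Longrightarrow> (\<forall>q\<ge>0. Mp q \<le> 0) \<Longrightarrow> M y \<le> M x"
proof -
  assume xy: "0 \<le> x" "x \<le> y" and n: "\<forall>q\<ge>0. Mp q \<le> 0"
  have d: "\<And>t. t \<in> {x..y} \<Longrightarrow> (M has_real_derivative Mp t) (at t within {x..y})"
    by (rule has_field_derivative_at_within[OF M_d])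
  have n': "\<And>t. t \<in> {x..y} \<Longrightarrow> Mp t \<le> 0" using n xy by auto
  show "M y \<le> M x" using deriv_within_nonpos_dec[OF d n', of x y] xy by simp
qed

lemma core:
  assumes nn: "\<forall>p\<in>I. \<psi> p \<ge> 0" and hyp: "\<forall>q\<ge>0. A_fun H \<rho> Phi \<mu> * w (q, 0) \<ge> 0"
  shows "\<And>q. q > 0 \<Longrightarrow> A_fun H \<rho> Phi \<mu> * w (q, 0) = 0 \<and> G q = 0"
proof -
  have Mpn: "\<forall>q\<ge>0. Mp q \<le> 0"
  proof (intro allI impI)
    fix q :: real assume "q \<ge> 0"
    then show "Mp q \<le> 0" using identity[of q] hyp[rule_format, of q] G_nn[OF nn, of q] by linarith
  qed
  have Mz: "M q = 0" if q: "q \<ge> 0" for q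
  proof -
    have "M q \<le> 0" using M_dec[OF _ q Mpn] M0 by simp
    moreover have "- M q \<le> 0"
    proof (rule field_le_epsilon)
      fix e :: real assume e: "e > 0"
      obtain Q where Q: "\<And>q. q \<ge> Q \<Longrightarrow> \<bar>M q\<bar> \<le> e" using M_decay[OF e] by blast
      have "M (max q Q) \<le> M q" using M_dec[OF q _ Mpn] by simp
      moreover have "\<bar>M (max q Q)\<bar> \<le> e" using Q by simp
      ultimately show "- M q \<le> 0 + e" by linarith
    qed
    ultimately show ?thesis by simp
  qed
  fix q :: real assume q: "q > 0"
  have "((\<lambda>_. 0) has_real_derivative Mp q) (at q)"
  proof (rule has_field_derivative_transform_within_open[OF M_d, where S="{0<..}"])
    fix x :: real assume "x \<in> {0<..}" then show "M x = 0" using Mz by simp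
  qed (use q in auto)
  then have "Mp q = 0" using DERIV_unique DERIV_const by blast
  then have "A_fun H \<rho> Phi \<mu> * w (q, 0) + G q = 0" using identity[of q] by simp
  then show "A_fun H \<rho> Phi \<mu> * w (q, 0) = 0 \<and> G q = 0"
    using hyp G_nn[OF nn, of q] q by (smt (verit) less_imp_le)
qed

lemma w_zero:
  assumes bz: "\<And>q p. q > 0 \<Longrightarrow> p \<in> I \<Longrightarrow> b q p = 0"
  shows "\<forall>x\<in>Rbar. w x = 0"
proof
  fix x assume "x \<in> Rbar"
  then obtain q p where x: "x = (q, p)" and p: "p \<in> I" by (cases x) (auto simp: Rbar_def)
  have bz': "b s p = 0" if "s \<ge> 0" for s
    using bz[OF _ p, of s] b_zero_at0[OF p] that by (cases "s = 0") auto
  have "\<exists>c. \<forall>s\<in>{0..}. w (s, p) = c"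
  proof (rule has_field_derivative_zero_constant)
    fix s :: real assume "s \<in> {0..}"
    then show "((\<lambda>s. w (s, p)) has_field_derivative 0) (at s within {0..})"
      using has_field_derivative_at_within[OF wq_d[OF p, of s]] bz'[of s] by (simp add: b_def)
  qed simp
  then obtain c where c: "\<And>s. s \<ge> 0 \<Longrightarrow> w (s, p) = c" by auto
  have "c = 0"
  proof (rule ccontr)
    assume "c \<noteq> 0"
    then have "\<bar>c\<bar> > 0" by simp
    from w_decay[of "[]", OF _ this] obtain Q where
      Q: "\<And>q p. Q \<le> \<bar>q\<bar> \<Longrightarrow> -1 \<le> p \<Longrightarrow> p \<le> 0 \<Longrightarrow> \<bar>w (q, p)\<bar> < \<bar>c\<bar>" by auto
    have "\<bar>w (\<bar>Q\<bar>, p)\<bar> < \<bar>c\<bar>" using Q[of "\<bar>Q\<bar>" p] p by auto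
    then show False using c[of "\<bar>Q\<bar>"] by simp
  qed
  then have "w (\<bar>q\<bar>, p) = 0" using c by simp
  then show "w x = 0" using w_even[of q p] x by (cases "q \<ge> 0") auto
qed

end


theorem theorem4p4:
  fixes \<alpha> :: real and \<rho> H :: "real \<Rightarrow> real"
    and Phi :: "real \<Rightarrow> real \<Rightarrow> real"
    and w :: "real \<times> real \<Rightarrow> real" and F :: real
  assumes alpha: "0 < \<alpha>" "\<alpha> < 1"
    and rho_reg: "C_ka_I 2 \<alpha> \<rho>"
    and rho_pos: "\<forall>p\<in>{-1..0}. \<rho> p > 0"
    and rho_p: "\<forall>p\<in>{-1..0}. dI \<rho> p \<le> 0"
    and H_reg: "C_ka_I 3 \<alpha> H"
    and H_bd: "H (-1) = 0" "H 0 = 1"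
    and H_p: "\<forall>p\<in>{-1..0}. dI H p > 0"
    and Phi: "\<forall>\<mu>\<ge>0. Phi_sol H \<rho> \<mu> (Phi \<mu>)"
    and wX: "in_X \<alpha> w"
    and sol: "height_eq H \<rho> w F"
  shows "((\<forall>q. w (q, 0) > 0) \<and> (\<forall>p\<in>{-1..0}. dI (Phi (1 / F\<^sup>2)) p \<ge> 0)
            \<longrightarrow> A_fun H \<rho> Phi (1 / F\<^sup>2) < 0)
       \<and> (\<forall>\<mu>. is_mu_cr H \<rho> Phi \<mu> \<and> F = \<mu> powr (-1/2)
            \<longrightarrow> (\<forall>x\<in>Rbar. w x = 0))"
proof -
  interpret pde_setup H \<rho> Phi \<alpha> w F
    by unfold_locales (use rho_reg H_reg H_p Phi wX sol H_bd in auto)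
  have r0: "\<rho> 0 > 0" using rho_pos by auto
  have mu_eq: "1 / F\<^sup>2 = \<mu>" by (simp add: \<mu>_def)
  have final: "\<forall>x\<in>Rbar. w x = 0"
    if nn: "\<forall>p\<in>I. \<psi> p \<ge> 0" and pos: "\<forall>p\<in>I. \<psi> p > 0"
      and hyp: "\<forall>q\<ge>0. A_fun H \<rho> Phi \<mu> * w (q, 0) \<ge> 0"
  proof (rule w_zero)
    fix q p :: real assume q: "q > 0" and p: "p \<in> I"
    have "G q = 0" using core[OF nn hyp q] by simp
    then show "b q p = 0" using G0_imp[OF nn _ p] pos p by blast
  qed
  show ?thesis
  proof (intro conjI impI allI)
    assume h: "(\<forall>q. w (q, 0) > 0) \<and> (\<forall>p\<in>{-1..0}. dI (Phi (1 / F\<^sup>2)) p \<ge> 0)"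
    have nn: "\<forall>p\<in>I. \<psi> p \<ge> 0"
    proof
      fix p assume p: "p \<in> I"
      then have "dI (Phi \<mu>) p \<ge> 0" using h mu_eq by auto
      moreover have "(dI H p)^3 > 0" using Hp_pos[OF p] by simp
      ultimately show "\<psi> p \<ge> 0" by (simp add: psi_def)
    qed
    show "A_fun H \<rho> Phi (1 / F\<^sup>2) < 0"
    proof (rule ccontr)
      assume "\<not> A_fun H \<rho> Phi (1 / F\<^sup>2) < 0"
      then have A0: "A_fun H \<rho> Phi \<mu> \<ge> 0" using mu_eq by simp
      have hyp: "\<forall>q\<ge>0. A_fun H \<rho> Phi \<mu> * w (q, 0) \<ge> 0"
        using A0 h by (simp add: less_imp_le)
      have Aw: "A_fun H \<rho> Phi \<mu> * w (1, 0) = 0" using core[OF nn hyp, of 1] by simp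
      have w1: "w (1, 0) \<noteq> 0" using h by (metis less_irrefl)
      have Az: "A_fun H \<rho> Phi \<mu> = 0" using Aw w1 by simp
      have pos: "\<forall>p\<in>I. \<psi> p > 0"
      proof (rule ballI, rule ccontr)
        fix p assume p: "p \<in> I" and "\<not> \<psi> p > 0"
        then have "\<psi> p \<le> 0" by simp
        then have "A_fun H \<rho> Phi \<mu> > 0" using A_pos_if_zero[OF mu_pos rho_p r0 nn p] by simp
        then show False using Az by simp
      qed
      have "\<forall>x\<in>Rbar. w x = 0" by (rule final[OF nn pos hyp])
      moreover have "(1::real, 0::real) \<in> Rbar" by (simp add: Rbar_def)
      ultimately have "w (1, 0) = 0" by blast
      then show False using w1 by simp
    qed
  next
    fix \<mu>c assume h: "is_mu_cr H \<rho> Phi \<mu>c \<and> F = \<mu>c powr (-1/2)"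
    have mc: "\<mu>c > 0" "A_fun H \<rho> Phi \<mu>c = 0" using h by (auto simp: is_mu_cr_def)
    have "F\<^sup>2 = \<mu>c powr (-1/2) * \<mu>c powr (-1/2)" using h by (simp add: power2_eq_square)
    also have "\<dots> = \<mu>c powr (-1)" by (simp add: powr_add[symmetric])
    also have "\<dots> = 1 / \<mu>c" using mc(1) by (simp add: powr_minus_divide)
    finally have "\<mu> = \<mu>c" using mc(1) by (simp add: \<mu>_def)
    then have pos: "\<forall>p\<in>I. \<psi> p > 0" using psi_pos_cr[OF _ rho_p r0] h by simp
    then have nn: "\<forall>p\<in>I. \<psi> p \<ge> 0" by (simp add: less_imp_le)
    have hyp: "\<forall>q\<ge>0. A_fun H \<rho> Phi \<mu> * w (q, 0) \<ge> 0" using mc(2) \<open>\<mu> = \<mu>c\<close> by simp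
    show "\<forall>x\<in>Rbar. w x = 0" by (rule final[OF nn pos hyp])
  qed
qed

end
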